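(* Let $G=G_{\mathbf E}$ be a multi-GGS group which is not the constant GGS group. Then every element of $N(B)$ fixes the vertex $0$, and $$N(B)|_0\subseteq N(B),\qquad C(B)|_0\subseteq C(B),$$ where $N(B),C(B)$ are the normaliser and centraliser of $B$ in $\mathrm{Aut}(X^* )$ and $S|_0=\{g|_0\mid g\in S\}$.
   Context: Let $p$ be an odd prime and $X=\{0,1,\dots,p-1\}$, identified with $\mathbb F_p$. $X^*$ is the $p$-regular rooted tree of finite words over $X$; $\mathrm{Aut}(X^* )$ acts on the right. Sections $g|_v$ are defined by $(vw)^g=v^g\,w^{g|_v}$. $\mathrm{Stab}(1)$ is the stabiliser of all one-letter words and $\psi_1\colon\mathrm{Stab}(1)\to\mathrm{Aut}(X^* )^p$, $g\mapsto(g|_0,\dots,g|_{p-1})$, is an isomorphism. Let $a$ be the rooted automorphism acting as $\sigma=(0\,1\,\cdots\,p-1)$ on the first letter and trivially on the remaining letters. Let $\mathbf E\le\mathbb F_p^{p-1}$ be a subspace of dimension $r\ge1$; $E$ is the $r\times(p-1)$ matrix whose rows form a fixed basis of $\mathbf E$, with columns $\mathbf e_1,\dots,\mathbf e_{p-1}$. For $\mathbf n\in\mathbb F_p^r$, $b^{\mathbf n}\in\mathrm{Stab}(1)$ is the unique automorphism with $\psi_1(b^{\mathbf n})=(b^{\mathbf n},a^{\mathbf n\cdot\mathbf e_1},\dots,a^{\mathbf n\cdot\mathbf e_{p-1}})$; $B=\{b^{\mathbf n}\mid\mathbf n\in\mathbb F_p^r\}$. $G_{\mathbf E}$ is generated by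 $a$ and $B$; it is the constant GGS group if $\mathbf E=\{(\lambda,\dots,\lambda)\mid\lambda\in\mathbb F_p\}$. *)

theory Defs
  imports Main "HOL-Computational_Algebra.Primes"
begin

text \<open>Words over X = {0,...,p-1}: lists of naturals below p.  An automorphism of
the p-regular rooted tree X* is represented by a function on nat lists which is a
length- and prefix-preserving bijection of the words over X and the identity on all
other lists (so that equality of automorphisms is equality of functions).
The action is on the right: w^g = g w, and the product gh (first g, then h)
is the function h o g.\<close>

definition words :: "nat \<Rightarrow> nat list set" where
  "words p = {w. set w \<subseteq> {..<p}}"

definition is_aut :: "nat \<Rightarrow> (nat list \<Rightarrow> nat list) \<Rightarrow> bool" where
  "is_aut p g \<longleftrightarrow> bij_betw g (words p) (words p)
     \<and> (\<forall>w\<in>words p. length (g w) = length w)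
     \<and> (\<forall>v\<in>words p. \<forall>w\<in>words p. take (length v) (g (v @ w)) = g v)
     \<and> (\<forall>w. w \<notin> words p \<longrightarrow> g w = w)"

text \<open>Section g|_v, defined by (vw)^g = v^g w^(g|_v).\<close>
definition sect :: "nat \<Rightarrow> (nat list \<Rightarrow> nat list) \<Rightarrow> nat list \<Rightarrow> (nat list \<Rightarrow> nat list)" where
  "sect p g v = (\<lambda>w. if w \<in> words p then drop (length v) (g (v @ w)) else w)"

fun rotfun :: "nat \<Rightarrow> nat \<Rightarrow> nat list \<Rightarrow> nat list" where
  "rotfun p k [] = []"
| "rotfun p k (x # w) = ((x + k) mod p) # w"

text \<open>The automorphism b with psi_1(b) = (b, a^(c 1), ..., a^(c (p-1))).\<close>
fun bfun :: "nat \<Rightarrow> (nat \<Rightarrow> nat) \<Rightarrow> nat list \<Rightarrow> nat list" where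
  "bfun p c [] = []"
| "bfun p c (x # w) = (if x = 0 then 0 # bfun p c w else x # rotfun p (c x) w)"

definition bgen :: "nat \<Rightarrow> (nat \<Rightarrow> nat) \<Rightarrow> nat list \<Rightarrow> nat list" where
  "bgen p c = (\<lambda>w. if w \<in> words p then bfun p c w else w)"

text \<open>E is the r x (p-1) matrix over F_p (entries E i x, i < r, 1 <= x <= p-1),
represented by natural numbers below p. n . e_x = (sum_i n_i E i x) mod p.\<close>
definition dotcol :: "nat \<Rightarrow> nat \<Rightarrow> (nat \<Rightarrow> nat \<Rightarrow> nat) \<Rightarrow> (nat \<Rightarrow> nat) \<Rightarrow> nat \<Rightarrow> nat" where
  "dotcol p r E n x = (\<Sum>i<r. n i * E i x) mod p"

definition Fpvecs :: "nat \<Rightarrow> nat \<Rightarrow> (nat \<Rightarrow> nat) set" where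
  "Fpvecs p r = {n. (\<forall>i<r. n i < p) \<and> (\<forall>i\<ge>r. n i = 0)}"

definition Bset :: "nat \<Rightarrow> nat \<Rightarrow> (nat \<Rightarrow> nat \<Rightarrow> nat) \<Rightarrow> (nat list \<Rightarrow> nat list) set" where
  "Bset p r E = {bgen p (dotcol p r E n) | n. n \<in> Fpvecs p r}"

definition rowspace :: "nat \<Rightarrow> nat \<Rightarrow> (nat \<Rightarrow> nat \<Rightarrow> nat) \<Rightarrow> (nat \<Rightarrow> nat) set" where
  "rowspace p r E = {(\<lambda>x. if x \<in> {1..p-1} then dotcol p r E n x else 0) | n. n \<in> Fpvecs p r}"

definition constvecs :: "nat \<Rightarrow> (nat \<Rightarrow> nat) set" where
  "constvecs p = {(\<lambda>x. if x \<in> {1..p-1} then l else 0) | l. l < p}"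

definition rows_indep :: "nat \<Rightarrow> nat \<Rightarrow> (nat \<Rightarrow> nat \<Rightarrow> nat) \<Rightarrow> bool" where
  "rows_indep p r E \<longleftrightarrow> (\<forall>n\<in>Fpvecs p r. (\<forall>x\<in>{1..p-1}. dotcol p r E n x = 0) \<longrightarrow> (\<forall>i<r. n i = 0))"

text \<open>Normaliser and centraliser of a set S in Aut(X*).  g^{-1} S g = S is expressed
without inverses: for each s there is s' with s g = g s', and conversely.
In function form the product s g is g o s.\<close>
definition normaliser :: "nat \<Rightarrow> (nat list \<Rightarrow> nat list) set \<Rightarrow> (nat list \<Rightarrow> nat list) set" where
  "normaliser p S = {g. is_aut p g \<and> (\<forall>s\<in>S. \<exists>s'\<in>S. g \<circ> s = s' \<circ> g)
                                    \<and> (\<forall>s'\<in>S. \<exists>s\<in>S. g \<circ> s = s' \<circ> g)}"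

definition centraliser :: "nat \<Rightarrow> (nat list \<Rightarrow> nat list) set \<Rightarrow> (nat list \<Rightarrow> nat list) set" where
  "centraliser p S = {g. is_aut p g \<and> (\<forall>s\<in>S. g \<circ> s = s \<circ> g)}"

end

theory Submission
  imports Defs
begin

lemma aut_words: "is_aut p g \<Longrightarrow> w \<in> words p \<Longrightarrow> g w \<in> words p"
  unfolding is_aut_def bij_betw_def by blast

lemma aut_inj: "is_aut p g \<Longrightarrow> inj_on g (words p)"
  unfolding is_aut_def bij_betw_def by blast

lemma aut_len: "is_aut p g \<Longrightarrow> w \<in> words p \<Longrightarrow> length (g w) = length w"
  unfolding is_aut_def by blast

lemma aut_pre: "is_aut p g \<Longrightarrow> v \<in> words p \<Longrightarrow> w \<in> words p \<Longrightarrow> take (length v) (g (v @ w)) = g v"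
  unfolding is_aut_def by blast

lemma aut_off: "is_aut p g \<Longrightarrow> w \<notin> words p \<Longrightarrow> g w = w"
  unfolding is_aut_def by blast

lemma words_Cons[simp]: "(x # w \<in> words p) = (x < p \<and> w \<in> words p)"
  unfolding words_def by auto

lemma words_Nil[simp]: "[] \<in> words p"
  unfolding words_def by auto

lemma words_app[simp]: "(v @ w \<in> words p) = (v \<in> words p \<and> w \<in> words p)"
  unfolding words_def by auto

lemma rotfun_words: "0 < p \<Longrightarrow> w \<in> words p \<Longrightarrow> rotfun p k w \<in> words p"
  by (cases w) auto

lemma bfun_words: "0 < p \<Longrightarrow> w \<in> words p \<Longrightarrow> bfun p c w \<in> words p"
  by (induction w) (auto simp: rotfun_words)

lemma bgen_words: "0 < p \<Longrightarrow> w \<in> words p \<Longrightarrow> bgen p c w \<in> words p"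
  by (simp add: bgen_def bfun_words)

lemma g0_split:
  assumes "is_aut p g" "g [0] = [0]" "w \<in> words p" "0 < p"
  shows "g (0 # w) = 0 # sect p g [0] w"
proof -
  have "take 1 (g ([0] @ w)) = g [0]" using aut_pre[OF assms(1), of "[0]" w] assms by simp
  hence "take 1 (g (0 # w)) = [0]" using assms by simp
  hence "g (0 # w) = [0] @ drop 1 (g (0 # w))" by (metis append_take_drop_id)
  thus ?thesis using assms(3) by (simp add: sect_def)
qed

lemma sect_aut:
  assumes "is_aut p g" "g [0] = [0]" "0 < p"
  shows "is_aut p (sect p g [0])"
proof -
  let ?h = "sect p g [0]"
  have sp: "\<And>w. w \<in> words p \<Longrightarrow> g (0 # w) = 0 # ?h w" using g0_split assms by blast
  have hw: "\<And>w. w \<in> words p \<Longrightarrow> ?h w \<in> words p"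
    using sp aut_words[OF assms(1)] assms(3) by (metis words_Cons)
  have inj: "inj_on ?h (words p)"
  proof (rule inj_onI)
    fix w1 w2 assume "w1 \<in> words p" "w2 \<in> words p" "?h w1 = ?h w2"
    hence "g (0 # w1) = g (0 # w2)" using sp by simp
    thus "w1 = w2" using aut_inj[OF assms(1)] \<open>w1 \<in> words p\<close> \<open>w2 \<in> words p\<close> assms(3)
      by (auto dest: inj_onD)
  qed
  have surj: "words p \<subseteq> ?h ` words p"
  proof
    fix v assume v: "v \<in> words p"
    hence "0 # v \<in> words p" using assms(3) by simp
    hence "0 # v \<in> g ` words p" using assms(1) unfolding is_aut_def bij_betw_def by blast
    then obtain u where u: "u \<in> words p" "g u = 0 # v" by (auto simp only: image_iff)
    have "length u = Suc (length v)" using aut_len[OF assms(1) u(1)] u(2) by simp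
    then obtain y w where yw: "u = y # w" by (cases u) auto
    have yW: "[y] \<in> words p" "w \<in> words p" using u(1) yw by auto
    have "take 1 (g ([y] @ w)) = g [y]" using aut_pre[OF assms(1) yW] by simp
    hence "g [y] = [0]" using u yw by simp
    hence "y = 0" using aut_inj[OF assms(1)] yW(1) assms(2,3)
      by (metis inj_onD list.inject words_Cons words_Nil)
    hence "?h w = v" using sp[OF yW(2)] u yw by simp
    thus "v \<in> ?h ` words p" using yW(2) by blast
  qed
  have bij: "bij_betw ?h (words p) (words p)"
    unfolding bij_betw_def using inj surj hw by blast
  have len: "\<forall>w\<in>words p. length (?h w) = length w"
  proof
    fix w assume w: "w \<in> words p"
    have "length (g (0 # w)) = Suc (length w)" using aut_len[OF assms(1)] w assms(3) by simp
    thus "length (?h w) = length w" using sp[OF w] by simp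
  qed
  have pre: "\<forall>v\<in>words p. \<forall>w\<in>words p. take (length v) (?h (v @ w)) = ?h v"
  proof (intro ballI)
    fix v w assume v: "v \<in> words p" and w: "w \<in> words p"
    have "take (length (0 # v)) (g ((0 # v) @ w)) = g (0 # v)"
      using aut_pre[OF assms(1), of "0 # v" w] v w assms(3) by simp
    hence "take (Suc (length v)) (0 # ?h (v @ w)) = 0 # ?h v"
      using sp v w by simp
    thus "take (length v) (?h (v @ w)) = ?h v" by simp
  qed
  have off: "\<forall>w. w \<notin> words p \<longrightarrow> ?h w = w" by (simp add: sect_def)
  show ?thesis unfolding is_aut_def using bij len pre off by blast
qed

lemma bgen_Cons0: "w \<in> words p \<Longrightarrow> 0 < p \<Longrightarrow> bgen p c (0 # w) = 0 # bgen p c w"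
  by (simp add: bgen_def)

lemma sect_comm:
  assumes "is_aut p g" "g [0] = [0]" "0 < p"
    and "g \<circ> bgen p c = bgen p c' \<circ> g"
  shows "sect p g [0] \<circ> bgen p c = bgen p c' \<circ> sect p g [0]"
proof
  fix w
  let ?h = "sect p g [0]"
  have sp: "\<And>w. w \<in> words p \<Longrightarrow> g (0 # w) = 0 # ?h w" using g0_split assms by blast
  have hw: "\<And>w. w \<in> words p \<Longrightarrow> ?h w \<in> words p"
    using sp aut_words[OF assms(1)] assms(3) by (metis words_Cons)
  show "(?h \<circ> bgen p c) w = (bgen p c' \<circ> ?h) w"
  proof (cases "w \<in> words p")
    case True
    have "g (bgen p c (0 # w)) = bgen p c' (g (0 # w))" using assms(4) by (metis comp_apply)
    hence "g (0 # bgen p c w) = bgen p c' (0 # ?h w)"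
      using True assms(3) sp by (simp add: bgen_Cons0)
    hence "0 # ?h (bgen p c w) = 0 # bgen p c' (?h w)"
      using True assms(3) sp hw bgen_words bgen_Cons0 by metis
    thus ?thesis by simp
  next
    case False
    thus ?thesis by (simp add: sect_def bgen_def)
  qed
qed

lemma fix0:
  assumes "prime p" "r \<ge> 1" "rows_indep p r E"
    and g: "g \<in> normaliser p (Bset p r E)"
  shows "g [0] = [0]"
proof -
  have p1: "1 < p" using assms(1) prime_gt_1_nat by blast
  have ga: "is_aut p g" using g by (simp add: normaliser_def)
  define n0 where "n0 = (\<lambda>i::nat. if i = 0 then 1 else (0::nat))"
  have n0F: "n0 \<in> Fpvecs p r" using p1 assms(2) by (auto simp: Fpvecs_def n0_def)
  have "\<exists>x\<in>{1..p-1}. dotcol p r E n0 x \<noteq> 0"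
  proof (rule ccontr)
    assume "\<not> ?thesis"
    hence "\<forall>i<r. n0 i = 0" using assms(3) n0F unfolding rows_indep_def by blast
    thus False using assms(2) by (auto simp: n0_def)
  qed
  then obtain x where x: "x \<in> {1..p-1}" "dotcol p r E n0 x \<noteq> 0" by blast
  define c where "c = dotcol p r E n0"
  have cx: "c x \<noteq> 0" "c x < p" using x(2) p1 by (auto simp: c_def dotcol_def)
  have xp: "x < p" "x \<noteq> 0" using x(1) p1 by auto
  have sB: "bgen p c \<in> Bset p r E" using n0F by (auto simp: Bset_def c_def)
  then obtain s' where s': "s' \<in> Bset p r E" "g \<circ> bgen p c = s' \<circ> g"
    using g unfolding normaliser_def by blast
  then obtain c' where c': "s' = bgen p c'" unfolding Bset_def by blast
  have W1: "[0, x, 0] \<in> words p" "[0, x, c x] \<in> words p" using xp cx p1 by auto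
  have sact: "bgen p c [0, x, 0] = [0, x, c x]"
    using W1 xp cx by (simp add: bgen_def)
  let ?u = "g [0, x, 0]" and ?u' = "g [0, x, c x]"
  have eq: "?u' = bgen p c' ?u" using s'(2) c' sact by (metis comp_apply)
  have uW: "?u \<in> words p" using aut_words[OF ga W1(1)] .
  have "length ?u = 3" using aut_len[OF ga W1(1)] by simp
  then obtain y z w where yzw: "?u = [y, z, w]"
    by (auto simp: numeral_3_eq_3 length_Suc_conv)
  have t2: "take 2 ?u = take 2 ?u'"
    using aut_pre[OF ga, of "[0,x]" "[0]"] aut_pre[OF ga, of "[0,x]" "[c x]"] W1 xp cx p1
    by (simp add: numeral_2_eq_2)
  have t1: "take 1 ?u = g [0]"
    using aut_pre[OF ga, of "[0]" "[x,0]"] W1 p1 by simp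
  have neq: "?u \<noteq> ?u'"
  proof
    assume "?u = ?u'"
    hence "[0, x, 0] = [0, x, c x]" using inj_onD[OF aut_inj[OF ga] _ W1] by blast
    thus False using cx by simp
  qed
  have "y = 0"
  proof (rule ccontr)
    assume y0: "y \<noteq> 0"
    have "?u' = [y, (z + c' y) mod p, w]" using eq yzw uW y0 by (simp add: bgen_def)
    hence "?u' = ?u" using t2 yzw by (simp add: numeral_2_eq_2)
    thus False using neq by simp
  qed
  thus ?thesis using t1 yzw by simp
qed

theorem mainTheorem6:
  fixes p r :: nat and E :: "nat \<Rightarrow> nat \<Rightarrow> nat"
  assumes "prime p" and "odd p" and "r \<ge> 1"
    and "\<forall>i<r. \<forall>x\<in>{1..p-1}. E i x < p"
    and "rows_indep p r E"
    and "rowspace p r E \<noteq> constvecs p"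
  shows "(\<forall>g\<in>normaliser p (Bset p r E). g [0] = [0])
       \<and> (\<forall>g\<in>normaliser p (Bset p r E). sect p g [0] \<in> normaliser p (Bset p r E))
       \<and> (\<forall>g\<in>centraliser p (Bset p r E). sect p g [0] \<in> centraliser p (Bset p r E))"
proof -
  have p0: "0 < p" using assms(1) prime_gt_0_nat by blast
  have F: "\<forall>g\<in>normaliser p (Bset p r E). g [0] = [0]"
    using fix0 assms(1,3,5) by blast
  have CN: "centraliser p (Bset p r E) \<subseteq> normaliser p (Bset p r E)"
    unfolding centraliser_def normaliser_def by blast
  have comm: "\<And>g s s'. g \<in> normaliser p (Bset p r E) \<Longrightarrow> s \<in> Bset p r E \<Longrightarrow> s' \<in> Bset p r E
      \<Longrightarrow> g \<circ> s = s' \<circ> g \<Longrightarrow> sect p g [0] \<circ> s = s' \<circ> sect p g [0]"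
  proof -
    fix g s s' assume g: "g \<in> normaliser p (Bset p r E)" and s: "s \<in> Bset p r E"
      and s': "s' \<in> Bset p r E" and e: "g \<circ> s = s' \<circ> g"
    obtain c where c: "s = bgen p c" using s unfolding Bset_def by blast
    obtain c' where c': "s' = bgen p c'" using s' unfolding Bset_def by blast
    have ga: "is_aut p g" using g by (simp add: normaliser_def)
    show "sect p g [0] \<circ> s = s' \<circ> sect p g [0]"
      using sect_comm[OF ga F[rule_format, OF g] p0] e c c' by blast
  qed
  have N: "\<forall>g\<in>normaliser p (Bset p r E). sect p g [0] \<in> normaliser p (Bset p r E)"
  proof
    fix g assume g: "g \<in> normaliser p (Bset p r E)"
    have ga: "is_aut p g" using g by (simp add: normaliser_def)
    have "is_aut p (sect p g [0])" using sect_aut[OF ga F[rule_format, OF g] p0] .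
    moreover have "\<forall>s\<in>Bset p r E. \<exists>s'\<in>Bset p r E. sect p g [0] \<circ> s = s' \<circ> sect p g [0]"
      using g comm unfolding normaliser_def by blast
    moreover have "\<forall>s'\<in>Bset p r E. \<exists>s\<in>Bset p r E. sect p g [0] \<circ> s = s' \<circ> sect p g [0]"
      using g comm unfolding normaliser_def by blast
    ultimately show "sect p g [0] \<in> normaliser p (Bset p r E)" unfolding normaliser_def by blast
  qed
  have C: "\<forall>g\<in>centraliser p (Bset p r E). sect p g [0] \<in> centraliser p (Bset p r E)"
  proof
    fix g assume g: "g \<in> centraliser p (Bset p r E)"
    hence gn: "g \<in> normaliser p (Bset p r E)" using CN by blast
    have ga: "is_aut p g" using g by (simp add: centraliser_def)
    have "is_aut p (sect p g [0])" using sect_aut[OF ga F[rule_format, OF gn] p0] .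
    moreover have "\<forall>s\<in>Bset p r E. sect p g [0] \<circ> s = s \<circ> sect p g [0]"
      using g gn comm unfolding centraliser_def by blast
    ultimately show "sect p g [0] \<in> centraliser p (Bset p r E)" unfolding centraliser_def by blast
  qed
  show ?thesis using F N C by blast
qed

end
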